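(* Let $\kappa\in\mathbb{C}$, $0\le n\le N$, and let $\lambda_1,\dots,\lambda_N,z_1,\dots,z_n$ be generic. Consider $F(z_{n+1},\dots,z_N)=\det_N\Omega_\kappa(\{z_1,\dots,z_N\},\{\lambda_1,\dots,\lambda_N\}|\{z_1,\dots,z_N\})$ as a meromorphic function of $z_{n+1},\dots,z_N$. Then the iterated residue of $F$ at $z_{n+1}=\lambda_{n+1},\dots,z_N=\lambda_N$ equals $$\prod_{a=n+1}^N\mathcal Y_\kappa\bigl(\lambda_a\big|\{z_1,\dots,z_n,\lambda_{n+1},\dots,\lambda_N\}\bigr)\cdot\det_n\Omega_\kappa\bigl(\{z_1,\dots,z_n\},\{\lambda_1,\dots,\lambda_n\}\big|\{z_1,\dots,z_n,\lambda_{n+1},\dots,\lambda_N\}\bigr).$$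
   Context: Fix $\eta\in\mathbb{C}$ with $\sinh\eta\ne0$ and $\xi_1,\dots,\xi_M\in\mathbb{C}$. $a(\lambda)=\prod_{j=1}^M\sinh(\lambda-\xi_j+\eta)$, $d(\lambda)=\prod_{j=1}^M\sinh(\lambda-\xi_j)$, $t(\lambda,\mu)=\frac{\sinh\eta}{\sinh(\lambda-\mu)\sinh(\lambda-\mu+\eta)}$. For a set $\{\nu_1..\nu_L\}$, $\mathcal Y_\kappa(\mu|\{\nu\})=a(\mu)\prod_{k=1}^L\sinh(\nu_k-\mu+\eta)+\kappa d(\mu)\prod_{k=1}^L\sinh(\nu_k-\mu-\eta)$. For sets $\{\lambda_1..\lambda_n\}$, $\{\mu_1..\mu_n\}$, $\{\nu_1..\nu_{n'}\}$, $\Omega_\kappa(\{\lambda\},\{\mu\}|\{\nu\})$ is the $n\times n$ matrix with $(\Omega_\kappa)_{jk}=a(\mu_k)t(\lambda_j,\mu_k)\prod_{c=1}^{n'}\sinh(\nu_c-\mu_k+\eta)-\kappa\,d(\mu_k)t(\mu_k,\lambda_j)\prod_{c=1}^{n'}\sinh(\nu_c-\mu_k-\eta)$ (rows indexed by the first set, columns by the second). *)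

theory Defs
  imports "HOL-Complex_Analysis.Complex_Analysis"
begin

text \<open>Inhomogeneous six-vertex data: eta, inhomogeneities xi 0 .. xi (M-1).\<close>

definition a_fun :: "complex \<Rightarrow> (nat \<Rightarrow> complex) \<Rightarrow> nat \<Rightarrow> complex \<Rightarrow> complex" where
  "a_fun \<eta> \<xi> M x = (\<Prod>j<M. sinh (x - \<xi> j + \<eta>))"

definition d_fun :: "(nat \<Rightarrow> complex) \<Rightarrow> nat \<Rightarrow> complex \<Rightarrow> complex" where
  "d_fun \<xi> M x = (\<Prod>j<M. sinh (x - \<xi> j))"

definition t_fun :: "complex \<Rightarrow> complex \<Rightarrow> complex \<Rightarrow> complex" where
  "t_fun \<eta> x \<mu> = sinh \<eta> / (sinh (x - \<mu>) * sinh (x - \<mu> + \<eta>))"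

text \<open>The function Y_kappa(mu | nus), the set nus given as a list.\<close>
definition Ycal :: "complex \<Rightarrow> (nat \<Rightarrow> complex) \<Rightarrow> nat \<Rightarrow> complex \<Rightarrow> complex \<Rightarrow> complex list \<Rightarrow> complex" where
  "Ycal \<eta> \<xi> M \<kappa> \<mu> \<nu>s =
     a_fun \<eta> \<xi> M \<mu> * (\<Prod>k<length \<nu>s. sinh (\<nu>s ! k - \<mu> + \<eta>))
     + \<kappa> * d_fun \<xi> M \<mu> * (\<Prod>k<length \<nu>s. sinh (\<nu>s ! k - \<mu> - \<eta>))"

text \<open>Entries of Omega_kappa(lams, mus | nus): rows indexed by lams, columns by mus.\<close>
definition Omega_entry :: "complex \<Rightarrow> (nat \<Rightarrow> complex) \<Rightarrow> nat \<Rightarrow> complex \<Rightarrow> complex list \<Rightarrow> complex list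
     \<Rightarrow> complex list \<Rightarrow> nat \<Rightarrow> nat \<Rightarrow> complex" where
  "Omega_entry \<eta> \<xi> M \<kappa> lams mus nus j k =
     a_fun \<eta> \<xi> M (mus ! k) * t_fun \<eta> (lams ! j) (mus ! k) * (\<Prod>c<length nus. sinh (nus ! c - mus ! k + \<eta>))
     - \<kappa> * d_fun \<xi> M (mus ! k) * t_fun \<eta> (mus ! k) (lams ! j) * (\<Prod>c<length nus. sinh (nus ! c - mus ! k - \<eta>))"

definition detN :: "nat \<Rightarrow> (nat \<Rightarrow> nat \<Rightarrow> complex) \<Rightarrow> complex" where
  "detN n A = (\<Sum>p\<in>{p. p permutes {..<n}}. of_int (sign p) * (\<Prod>i<n. A i (p i)))"

definition Omega_det :: "complex \<Rightarrow> (nat \<Rightarrow> complex) \<Rightarrow> nat \<Rightarrow> complex \<Rightarrow> complex list \<Rightarrow> complex list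
     \<Rightarrow> complex list \<Rightarrow> complex" where
  "Omega_det \<eta> \<xi> M \<kappa> lams mus nus = detN (length lams) (Omega_entry \<eta> \<xi> M \<kappa> lams mus nus)"

text \<open>Iterated residue: iter_res F [p1,...,pm] takes the residue of F in its first variable
  at p1, then of the result in the (new) first variable at p2, etc.\<close>
fun iter_res :: "(complex list \<Rightarrow> complex) \<Rightarrow> complex list \<Rightarrow> complex" where
  "iter_res F [] = F []"
| "iter_res F (p # ps) = iter_res (\<lambda>ws. residue (\<lambda>w. F (w # ws)) p) ps"

text \<open>"P holds for generic points of C^k": P holds on an open dense subset of C^k
  (points of C^k represented as lists of length k, with the product topology).\<close>
definition generic :: "nat \<Rightarrow> (complex list \<Rightarrow> bool) \<Rightarrow> bool" where
  "generic k P \<longleftrightarrow> (\<exists>U. U \<subseteq> {xs. length xs = k} \<and> (\<forall>xs\<in>U. P xs)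
     \<and> (\<forall>xs\<in>U. \<exists>e>0. \<forall>ys. length ys = k \<and> (\<forall>i<k. dist (ys ! i) (xs ! i) < e) \<longrightarrow> ys \<in> U)
     \<and> (\<forall>xs. length xs = k \<longrightarrow> (\<forall>e>0. \<exists>ys\<in>U. \<forall>i<k. dist (ys ! i) (xs ! i) < e)))"

end

theory Submission
  imports Defs "Jordan_Normal_Form.Determinant"
begin

lemma detN_eq_det: "detN m A = Determinant.det (mat m m (\<lambda>(i,j). A i j))"
  unfolding detN_def Determinant.det_def
  by (auto simp: atLeast0LessThan intro!: sum.cong prod.cong dest: permutes_in_image)

lemma detN_scale_row:
  assumes "r < m" "\<And>k. B r k = c * A r k" "\<And>i k. i \<noteq> r \<Longrightarrow> B i k = A i k"
  shows "detN m B = c * detN m A"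
proof -
  have "(\<Prod>i<m. B i (p i)) = c * (\<Prod>i<m. A i (p i))" for p
  proof -
    have "(\<Prod>i<m. B i (p i)) = B r (p r) * (\<Prod>i\<in>{..<m}-{r}. B i (p i))"
      using assms(1) by (simp add: prod.remove)
    also have "\<dots> = c * (A r (p r) * (\<Prod>i\<in>{..<m}-{r}. A i (p i)))"
      using assms(2,3) by simp
    also have "A r (p r) * (\<Prod>i\<in>{..<m}-{r}. A i (p i)) = (\<Prod>i<m. A i (p i))"
      using assms(1) by (simp add: prod.remove)
    finally show ?thesis .
  qed
  then show ?thesis unfolding detN_def by (simp add: sum_distrib_left mult.left_commute)
qed

lemma detN_row_unit:
  assumes "r < m" "\<And>k. k < m \<Longrightarrow> k \<noteq> r \<Longrightarrow> B r k = 0"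
  shows "detN m B = B r r * detN (m-1) (\<lambda>i j. B (insert_index r i) (insert_index r j))"
proof -
  define M where "M = mat m m (\<lambda>(i,j). B i j)"
  have M: "M \<in> carrier_mat m m" unfolding M_def by simp
  have "detN m B = Determinant.det M" unfolding M_def detN_eq_det ..
  also have "\<dots> = (\<Sum>j<m. M $$ (r,j) * cofactor M r j)"
    by (rule laplace_expansion_row[OF M assms(1)])
  also have "\<dots> = M $$ (r,r) * cofactor M r r"
    using assms by (subst sum.remove[of _ r]) (auto simp: M_def intro!: sum.neutral)
  also have "cofactor M r r = Determinant.det (mat_delete M r r)"
    unfolding cofactor_def by (simp flip: mult_2)
  also have "mat_delete M r r = mat (m-1) (m-1) (\<lambda>(i,j). B (insert_index r i) (insert_index r j))"
    unfolding mat_delete_def M_def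
    by (rule eq_matI) (auto simp: insert_index_def)
  finally show ?thesis using assms(1) by (simp add: M_def detN_eq_det)
qed

lemma holomorphic_on_sinh' [holomorphic_intros]:
  assumes "f holomorphic_on A"
  shows "(\<lambda>x. sinh (f x :: complex)) holomorphic_on A"
proof -
  have "(\<lambda>x. (exp (f x) - exp (- f x)) / 2) holomorphic_on A"
    by (intro holomorphic_intros assms) auto
  moreover have "(\<lambda>x. sinh (f x)) = (\<lambda>x. (exp (f x) - exp (- f x)) / 2)"
    by (simp add: sinh_field_def)
  ultimately show ?thesis by simp
qed

lemma sinh_over_lim: "((\<lambda>w. (w - p) / sinh (w - p :: complex)) \<longlongrightarrow> 1) (at p)"
proof -
  have "(sinh has_field_derivative cosh 0) (at (0::complex))"
    by (rule has_field_derivative_sinh[of "\<lambda>x. x", OF DERIV_ident, simplified])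
  then have "((\<lambda>h. sinh h / h) \<longlongrightarrow> (1::complex)) (at 0)"
    unfolding DERIV_def by simp
  then have "((\<lambda>h. inverse (sinh h / h)) \<longlongrightarrow> (1::complex)) (at 0)"
    using tendsto_inverse[of "\<lambda>h. sinh h / h" 1 "at (0::complex)"] by simp
  then have "((\<lambda>h. h / sinh h) \<longlongrightarrow> (1::complex)) (at 0)"
    by simp
  then have "((\<lambda>h. (p + h - p) / sinh (p + h - p)) \<longlongrightarrow> (1::complex)) (at 0)"
    by (simp only: add_diff_cancel_left')
  then show ?thesis
    by (rule LIM_offset_zero_cancel)
qed

lemma residue_over_sinh:
  assumes S: "open S" "p \<in> S" and N: "N holomorphic_on S"
    and ev: "eventually (\<lambda>w. F w = N w / sinh (w - p)) (at p)"
  shows "residue F p = N p"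
proof -
  have "eventually (\<lambda>w. (w - p) / sinh (w - p) \<noteq> 0) (at p)"
    by (rule tendsto_imp_eventually_ne[OF sinh_over_lim]) simp
  then have "eventually (\<lambda>w. sinh (w - p) \<noteq> 0) (at p)"
    by (rule eventually_mono) auto
  then obtain r0 where r0: "r0 > 0" "\<And>w. w \<noteq> p \<Longrightarrow> dist w p < r0 \<Longrightarrow> sinh (w - p) \<noteq> 0"
    unfolding eventually_at by blast
  obtain r1 where r1: "r1 > 0" "ball p r1 \<subseteq> S"
    using S openE by blast
  define r where "r = min r0 r1"
  have r: "r > 0" "ball p r \<subseteq> S" using r0 r1 unfolding r_def by auto
  define G where "G = (\<lambda>w. N w / sinh (w - p))"
  have "residue F p = residue G p"
    unfolding G_def by (rule residue_cong[OF ev refl])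
  also have "residue G p = N p"
  proof (rule residue_simple'[of "ball p r"])
    show "open (ball p r)" "p \<in> ball p r" using r by auto
    show "G holomorphic_on ball p r - {p}"
      unfolding G_def
      apply (intro holomorphic_intros holomorphic_on_subset[OF N])
      using r r0 by (auto simp: r_def dist_commute)
    have "((\<lambda>w. N w * ((w - p) / sinh (w - p))) \<longlongrightarrow> N p * 1) (at p)"
    proof (intro tendsto_mult sinh_over_lim)
      have "isCont N p"
        using N S by (meson holomorphic_on_imp_continuous_on continuous_on_eq_continuous_at)
      then show "(N \<longlongrightarrow> N p) (at p)" by (simp add: isCont_def)
    qed
    then show "((\<lambda>w. G w * (w - p)) \<longlongrightarrow> N p) (at p)"
      unfolding G_def by simp
  qed
  finally show ?thesis .
qed

lemma sinh_ev_nz: "eventually (\<lambda>w. sinh (w - p) \<noteq> (0::complex)) (at p)"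
proof -
  have "eventually (\<lambda>w. (w - p) / sinh (w - p) \<noteq> 0) (at p)"
    by (rule tendsto_imp_eventually_ne[OF sinh_over_lim]) simp
  then show ?thesis by (rule eventually_mono) auto
qed

lemma prod_nth_list: "(\<Prod>c<length xs. g (xs ! c)) = prod_list (map g xs)"
  by (induction xs) (auto simp del: prod.lessThan_Suc simp add: prod.lessThan_Suc_shift)

lemma prod_nth_mid:
  "(\<Prod>c<length (V @ w # ws). g ((V @ w # ws) ! c)) = prod_list (map g V) * g w * prod_list (map g ws)"
  unfolding prod_nth_list by (simp add: mult.assoc)

lemma nth_insert_index:
  assumes "i < length xs + length ys"
  shows "(xs @ p # ys) ! insert_index (length xs) i = (xs @ ys) ! i"
  using assms by (auto simp: insert_index_def nth_append)

lemma nth_mid_other: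
  assumes "k < length (C @ p # P')" "k \<noteq> length C"
  shows "(C @ p # P') ! k \<in> set (C @ P')"
proof (cases "k < length C")
  case True then show ?thesis by (auto simp: nth_append)
next
  case False
  then obtain j where j: "k = Suc (length C + j)" using assms(2)
    by (metis add_Suc_right less_imp_Suc_add linorder_neqE_nat)
  then have "j < length P'" using assms(1) by simp
  then show ?thesis using j by (auto simp: nth_append)
qed

lemma nth_mid_same:
  assumes "i \<noteq> length zs"
  shows "(zs @ w # ws) ! i = (zs @ p # ws) ! i"
  using assms by (auto simp: nth_append nth_Cons split: nat.splits)

lemma detN_cong:
  assumes "\<And>i j. i < m \<Longrightarrow> j < m \<Longrightarrow> A i j = A' i j"
  shows "detN m A = detN m A'"
  unfolding detN_def using assms
  by (auto intro!: sum.cong prod.cong assms) (metis lessThan_iff permutes_in_image)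

lemma holo_detN:
  assumes "\<And>i k. i < m \<Longrightarrow> k < m \<Longrightarrow> (\<lambda>w. B w i k) holomorphic_on S"
  shows "(\<lambda>w. detN m (B w)) holomorphic_on S"
  unfolding detN_def
  by (intro holomorphic_intros assms) (auto dest: permutes_in_image)

lemma ev_nz_nhds:
  fixes f :: "complex \<Rightarrow> complex"
  assumes "isCont f p" "f p \<noteq> 0"
  shows "eventually (\<lambda>w. f w \<noteq> 0) (nhds p)"
  using assms by (intro tendsto_imp_eventually_ne[of f "f p"]) (auto simp: isCont_def tendsto_at_iff_tendsto_nhds)

lemma res_step:
  fixes zs ws C P' V :: "complex list" and p \<eta> \<kappa> :: complex and h :: "complex \<Rightarrow> complex"
  assumes len: "length C = length zs" "length P' = length ws" and eta: "sinh \<eta> \<noteq> 0"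
    and good: "\<And>x. x \<in> set (C @ P') \<Longrightarrow> sinh (p - x) \<noteq> 0 \<and> sinh (p - x + \<eta>) \<noteq> 0 \<and> sinh (p - x - \<eta>) \<noteq> 0"
    and h: "h holomorphic_on UNIV"
  shows "residue (\<lambda>w. h w * Omega_det \<eta> \<xi> M \<kappa> (zs @ w # ws) (C @ p # P') (V @ w # ws)) p
         = h p * Ycal \<eta> \<xi> M \<kappa> p (V @ p # ws) * Omega_det \<eta> \<xi> M \<kappa> (zs @ ws) (C @ P') (V @ p # ws)"
proof -
  define n where "n = length zs"
  define m where "m = Suc (n + length ws)"
  define cols where "cols = C @ p # P'"
  define nus where "nus = (\<lambda>w::complex. V @ w # ws)"
  define A where "A = (\<lambda>w. Omega_entry \<eta> \<xi> M \<kappa> (zs @ w # ws) cols (nus w))"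
  define Pp where "Pp = (\<lambda>w x. \<Prod>c<length (nus w). sinh (nus w ! c - x + \<eta>))"
  define Pm where "Pm = (\<lambda>w x. \<Prod>c<length (nus w). sinh (nus w ! c - x - \<eta>))"
  define Bnn where "Bnn = (\<lambda>w. a_fun \<eta> \<xi> M p * (sinh \<eta> / sinh (w - p + \<eta>)) * Pp w p
      + \<kappa> * d_fun \<xi> M p * (sinh \<eta> / sinh (p - w + \<eta>)) * Pm w p)"
  define B where "B = (\<lambda>w i k. if i = n then (if k = n then Bnn w else sinh (w - p) * A w i k) else A w i k)"
  have lenm: "length (zs @ w # ws) = m" for w by (simp add: m_def n_def)
  have lencols: "length cols = m" using len by (simp add: cols_def m_def n_def)
  have colsn: "cols ! n = p" using len by (simp add: cols_def n_def nth_append)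
  have rown: "(zs @ w # ws) ! n = w" for w by (simp add: n_def nth_append)
  have cols_other: "cols ! k \<in> set (C @ P')" if "k < m" "k \<noteq> n" for k
    using nth_mid_other[of k C p P'] lencols len that by (simp add: cols_def n_def)
  have Pp_holo: "(\<lambda>w. Pp w x) holomorphic_on S" for x S
    unfolding Pp_def nus_def prod_nth_mid[where g="\<lambda>y. sinh (y - x + \<eta>)"] by (intro holomorphic_intros)
  have Pm_holo: "(\<lambda>w. Pm w x) holomorphic_on S" for x S
    unfolding Pm_def nus_def prod_nth_mid[where g="\<lambda>y. sinh (y - x - \<eta>)"] by (intro holomorphic_intros)
  define good_at where "good_at = (\<lambda>w. (\<forall>c\<in>set (C @ P'). sinh (w - c) \<noteq> 0 \<and> sinh (w - c + \<eta>) \<noteq> 0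
      \<and> sinh (c - w) \<noteq> 0 \<and> sinh (c - w + \<eta>) \<noteq> 0) \<and> sinh (w - p + \<eta>) \<noteq> 0 \<and> sinh (p - w + \<eta>) \<noteq> 0)"
  have "eventually good_at (nhds p)"
  proof -
    have sm: "sinh (c - p + \<eta>) = - sinh (p - c - \<eta>)" for c
    proof -
      have "c - p + \<eta> = - (p - c - \<eta>)" by simp
      then show ?thesis by (simp only: sinh_minus)
    qed
    have sm2: "sinh (c - p) = - sinh (p - c)" for c
    proof -
      have "c - p = - (p - c)" by simp
      then show ?thesis by (simp only: sinh_minus)
    qed
    have "eventually (\<lambda>w. \<forall>c\<in>set (C @ P'). sinh (w - c) \<noteq> 0 \<and> sinh (w - c + \<eta>) \<noteq> 0
      \<and> sinh (c - w) \<noteq> 0 \<and> sinh (c - w + \<eta>) \<noteq> 0) (nhds p)"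
    proof (intro eventually_ball_finite ballI eventually_conj)
      fix c assume c: "c \<in> set (C @ P')"
      show "eventually (\<lambda>w. sinh (w - c) \<noteq> 0) (nhds p)"
        using good[OF c] by (intro ev_nz_nhds) (auto intro!: continuous_intros)
      show "eventually (\<lambda>w. sinh (w - c + \<eta>) \<noteq> 0) (nhds p)"
        using good[OF c] by (intro ev_nz_nhds) (auto intro!: continuous_intros)
      show "eventually (\<lambda>w. sinh (c - w) \<noteq> 0) (nhds p)"
        using good[OF c] sm2[of c] by (intro ev_nz_nhds) (auto intro!: continuous_intros)
      show "eventually (\<lambda>w. sinh (c - w + \<eta>) \<noteq> 0) (nhds p)"
        using good[OF c] sm[of c] by (intro ev_nz_nhds) (auto intro!: continuous_intros)
    qed auto
    moreover have "eventually (\<lambda>w. sinh (w - p + \<eta>) \<noteq> 0) (nhds p)"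
      using eta by (intro ev_nz_nhds) (auto intro!: continuous_intros)
    moreover have "eventually (\<lambda>w. sinh (p - w + \<eta>) \<noteq> 0) (nhds p)"
      using eta by (intro ev_nz_nhds) (auto intro!: continuous_intros)
    ultimately show ?thesis unfolding good_at_def by eventually_elim blast
  qed
  then obtain T where T: "open T" "p \<in> T" "\<And>w. w \<in> T \<Longrightarrow> good_at w"
    unfolding eventually_nhds by blast
  have holoA_other: "(\<lambda>w. A w i k) holomorphic_on S" if "i \<noteq> n" for i k S
  proof -
    define r0 where "r0 = (zs @ p # ws) ! i"
    have r0: "(zs @ w # ws) ! i = r0" for w
      unfolding r0_def using nth_mid_same[of i zs w ws p] that n_def by simp
    have "(\<lambda>w. A w i k) = (\<lambda>w. a_fun \<eta> \<xi> M (cols!k) * t_fun \<eta> r0 (cols!k) * Pp w (cols!k)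
       - \<kappa> * d_fun \<xi> M (cols!k) * t_fun \<eta> (cols!k) r0 * Pm w (cols!k))"
      unfolding A_def Omega_entry_def Pp_def Pm_def r0 by simp
    then show ?thesis by (simp only:) (intro holomorphic_intros Pp_holo Pm_holo)
  qed
  have holoA_n: "(\<lambda>w. sinh (w - p) * A w n k) holomorphic_on T" if "k < m" "k \<noteq> n" for k
  proof -
    define c where "c = cols ! k"
    have c: "c \<in> set (C @ P')" using cols_other[OF that] c_def by simp
    have "(\<lambda>w. sinh (w - p) * A w n k) = (\<lambda>w. sinh (w - p) * (a_fun \<eta> \<xi> M c * (sinh \<eta> / (sinh (w - c) * sinh (w - c + \<eta>))) * Pp w c
       - \<kappa> * d_fun \<xi> M c * (sinh \<eta> / (sinh (c - w) * sinh (c - w + \<eta>))) * Pm w c))"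
      unfolding A_def Omega_entry_def Pp_def Pm_def t_fun_def c_def rown by simp
    moreover have "(\<lambda>w. sinh (w - p) * (a_fun \<eta> \<xi> M c * (sinh \<eta> / (sinh (w - c) * sinh (w - c + \<eta>))) * Pp w c
       - \<kappa> * d_fun \<xi> M c * (sinh \<eta> / (sinh (c - w) * sinh (c - w + \<eta>))) * Pm w c)) holomorphic_on T"
      using T(3) c unfolding good_at_def by (intro holomorphic_intros Pp_holo Pm_holo) auto
    ultimately show ?thesis by simp
  qed
  have holoBnn: "Bnn holomorphic_on T"
    unfolding Bnn_def using T(3) unfolding good_at_def
    by (intro holomorphic_intros Pp_holo Pm_holo) auto
  have holoB: "(\<lambda>w. B w i k) holomorphic_on T" if "i < m" "k < m" for i k
    unfolding B_def using holoA_other holoA_n holoBnn that by (cases "i = n"; cases "k = n") auto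
  have holoN: "(\<lambda>w. h w * detN m (B w)) holomorphic_on T"
    by (intro holomorphic_intros holo_detN holoB holomorphic_on_subset[OF h]) auto
  have ev: "eventually (\<lambda>w. h w * Omega_det \<eta> \<xi> M \<kappa> (zs @ w # ws) (C @ p # P') (V @ w # ws)
       = h w * detN m (B w) / sinh (w - p)) (at p)"
  proof -
    have "eventually (\<lambda>w. w \<in> T) (at p)"
      using T(1,2) eventually_at_topological by blast
    then show ?thesis using sinh_ev_nz[of p]
    proof eventually_elim
      case (elim w)
      have g: "good_at w" using T(3) elim(1) .
      have "detN m (B w) = sinh (w - p) * detN m (A w)"
      proof (rule detN_scale_row)
        show "n < m" by (simp add: m_def)
        show "B w i k = A w i k" if "i \<noteq> n" for i k using that by (simp add: B_def)
        show "B w n k = sinh (w - p) * A w n k" for k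
        proof (cases "k = n")
          case True
          have "p - w = - (w - p)" by simp
          then have sm: "sinh (p - w) = - sinh (w - p)" by (simp only: sinh_minus)
          have "A w n n = a_fun \<eta> \<xi> M p * (sinh \<eta> / (sinh (w - p) * sinh (w - p + \<eta>))) * Pp w p
             - \<kappa> * d_fun \<xi> M p * (sinh \<eta> / (sinh (p - w) * sinh (p - w + \<eta>))) * Pm w p"
            unfolding A_def Omega_entry_def Pp_def Pm_def t_fun_def colsn rown by simp
          then show ?thesis using True g elim(2) sm unfolding B_def Bnn_def good_at_def
            by (simp add: field_simps)
        qed (simp add: B_def)
      qed
      then show ?case using elim(2)
        unfolding Omega_det_def lenm A_def cols_def nus_def by simp
    qed
  qed
  have mm: "length (zs @ ws) = m - 1" by (simp add: m_def n_def)
  have "residue (\<lambda>w. h w * Omega_det \<eta> \<xi> M \<kappa> (zs @ w # ws) (C @ p # P') (V @ w # ws)) p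
      = h p * detN m (B p)"
    by (rule residue_over_sinh[OF T(1,2) holoN ev])
  also have "detN m (B p) = B p n n * detN (m-1) (\<lambda>i j. B p (insert_index n i) (insert_index n j))"
    by (rule detN_row_unit) (auto simp: m_def B_def)
  also have "B p n n = Ycal \<eta> \<xi> M \<kappa> p (V @ p # ws)"
    unfolding B_def Bnn_def Ycal_def Pp_def Pm_def nus_def using eta by simp
  also have "detN (m-1) (\<lambda>i j. B p (insert_index n i) (insert_index n j))
      = Omega_det \<eta> \<xi> M \<kappa> (zs @ ws) (C @ P') (V @ p # ws)"
    unfolding Omega_det_def mm
  proof (rule detN_cong)
    fix i j assume ij0: "i < m - 1" "j < m - 1"
    then have ij: "i < length (zs @ ws)" "j < length (zs @ ws)" using mm by auto
    have ri: "(zs @ p # ws) ! insert_index n i = (zs @ ws) ! i"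
      unfolding n_def by (rule nth_insert_index) (use ij in simp)
    have cj: "cols ! insert_index n j = (C @ P') ! j"
      unfolding n_def cols_def len(1)[symmetric] by (rule nth_insert_index) (use ij len in simp)
    show "B p (insert_index n i) (insert_index n j) = Omega_entry \<eta> \<xi> M \<kappa> (zs @ ws) (C @ P') (V @ p # ws) i j"
      unfolding B_def A_def Omega_entry_def nus_def using ri cj by simp
  qed
  finally show ?thesis by (simp add: mult.assoc)
qed


definition gd :: "complex \<Rightarrow> complex \<Rightarrow> complex \<Rightarrow> bool" where
  "gd \<eta> x y \<longleftrightarrow> sinh (x - y) \<noteq> 0 \<and> sinh (x - y + \<eta>) \<noteq> 0 \<and> sinh (x - y - \<eta>) \<noteq> 0"

lemma gd_sym: "gd \<eta> x y \<longleftrightarrow> gd \<eta> y x"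
proof -
  have a: "sinh (y - x) = - sinh (x - y)"
  proof -
    have "y - x = - (x - y)" by simp
    then show ?thesis by (simp only: sinh_minus)
  qed
  have b: "sinh (y - x + \<eta>) = - sinh (x - y - \<eta>)"
  proof -
    have "y - x + \<eta> = - (x - y - \<eta>)" by simp
    then show ?thesis by (simp only: sinh_minus)
  qed
  have c: "sinh (y - x - \<eta>) = - sinh (x - y + \<eta>)"
  proof -
    have "y - x - \<eta> = - (x - y + \<eta>)" by simp
    then show ?thesis by (simp only: sinh_minus)
  qed
  show ?thesis unfolding gd_def a b c by auto
qed

lemma iter_res_cong:
  assumes "\<And>ws. length ws = length ps \<Longrightarrow> F ws = G ws"
  shows "iter_res F ps = iter_res G ps"
  using assms
proof (induction ps arbitrary: F G)
  case Nil
  then show ?case by simp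
next
  case (Cons p ps)
  show ?case unfolding iter_res.simps
    by (rule Cons.IH) (simp add: Cons.prems)
qed

lemma Ycal_holo: "(\<lambda>w. Ycal \<eta> \<xi> M \<kappa> q (V @ w # ws)) holomorphic_on S"
  unfolding Ycal_def prod_nth_mid[where g="\<lambda>y. sinh (y - q + \<eta>)"] prod_nth_mid[where g="\<lambda>y. sinh (y - q - \<eta>)"]
  by (intro holomorphic_intros)

lemma prod_list_holo:
  assumes "\<And>q. q \<in> set Q \<Longrightarrow> (\<lambda>w. f q w) holomorphic_on S"
  shows "(\<lambda>w. prod_list (map (\<lambda>q. f q w) Q)) holomorphic_on S"
  using assms by (induction Q) (auto intro!: holomorphic_intros)

lemma iter_main:
  fixes zs C V Q P :: "complex list"
  assumes eta: "sinh \<eta> \<noteq> 0" and len: "length C = length zs"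
  shows "distinct (C @ P) \<Longrightarrow> (\<forall>x\<in>set (C @ P). \<forall>y\<in>set (C @ P). x \<noteq> y \<longrightarrow> gd \<eta> x y) \<Longrightarrow>
    iter_res (\<lambda>ws. prod_list (map (\<lambda>q. Ycal \<eta> \<xi> M \<kappa> q (V @ ws)) Q)
         * Omega_det \<eta> \<xi> M \<kappa> (zs @ ws) (C @ P) (V @ ws)) P
    = prod_list (map (\<lambda>q. Ycal \<eta> \<xi> M \<kappa> q (V @ P)) Q)
      * prod_list (map (\<lambda>q. Ycal \<eta> \<xi> M \<kappa> q (V @ P)) P) * Omega_det \<eta> \<xi> M \<kappa> zs C (V @ P)"
proof (induction P arbitrary: V Q)
  case Nil
  then show ?case by simp
next
  case (Cons p P')
  have good: "sinh (p - x) \<noteq> 0 \<and> sinh (p - x + \<eta>) \<noteq> 0 \<and> sinh (p - x - \<eta>) \<noteq> 0"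
    if "x \<in> set (C @ P')" for x
  proof -
    have "x \<noteq> p" using Cons.prems(1) that by auto
    then have "gd \<eta> p x" using Cons.prems(2) that by auto
    then show ?thesis unfolding gd_def .
  qed
  have step: "residue (\<lambda>w. prod_list (map (\<lambda>q. Ycal \<eta> \<xi> M \<kappa> q (V @ w # ws)) Q)
         * Omega_det \<eta> \<xi> M \<kappa> (zs @ w # ws) (C @ p # P') (V @ w # ws)) p
     = prod_list (map (\<lambda>q. Ycal \<eta> \<xi> M \<kappa> q ((V @ [p]) @ ws)) (Q @ [p]))
         * Omega_det \<eta> \<xi> M \<kappa> (zs @ ws) (C @ P') ((V @ [p]) @ ws)"
    if "length ws = length P'" for ws
  proof -
    have "residue (\<lambda>w. prod_list (map (\<lambda>q. Ycal \<eta> \<xi> M \<kappa> q (V @ w # ws)) Q)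
         * Omega_det \<eta> \<xi> M \<kappa> (zs @ w # ws) (C @ p # P') (V @ w # ws)) p
      = prod_list (map (\<lambda>q. Ycal \<eta> \<xi> M \<kappa> q (V @ p # ws)) Q) * Ycal \<eta> \<xi> M \<kappa> p (V @ p # ws)
         * Omega_det \<eta> \<xi> M \<kappa> (zs @ ws) (C @ P') (V @ p # ws)"
      by (rule res_step[OF len that[symmetric] eta good])
         (auto intro!: prod_list_holo Ycal_holo)
    then show ?thesis by (simp add: mult.assoc)
  qed
  have "iter_res (\<lambda>ws. prod_list (map (\<lambda>q. Ycal \<eta> \<xi> M \<kappa> q (V @ ws)) Q)
         * Omega_det \<eta> \<xi> M \<kappa> (zs @ ws) (C @ p # P') (V @ ws)) (p # P')
     = iter_res (\<lambda>ws. prod_list (map (\<lambda>q. Ycal \<eta> \<xi> M \<kappa> q ((V @ [p]) @ ws)) (Q @ [p]))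
         * Omega_det \<eta> \<xi> M \<kappa> (zs @ ws) (C @ P') ((V @ [p]) @ ws)) P'"
    unfolding iter_res.simps by (rule iter_res_cong) (simp add: step)
  also have "\<dots> = prod_list (map (\<lambda>q. Ycal \<eta> \<xi> M \<kappa> q ((V @ [p]) @ P')) (Q @ [p]))
      * prod_list (map (\<lambda>q. Ycal \<eta> \<xi> M \<kappa> q ((V @ [p]) @ P')) P') * Omega_det \<eta> \<xi> M \<kappa> zs C ((V @ [p]) @ P')"
    using Cons.prems by (intro Cons.IH) auto
  finally show ?case by (simp add: mult_ac)
qed


lemma sinh_zeros_countable: "countable {u::complex. sinh u = 0}"
proof -
  have "{u::complex. sinh u = 0} \<subseteq> range (\<lambda>n::int. \<i> * (of_int n * of_real pi))"
  proof
    fix u :: complex assume "u \<in> {u. sinh u = 0}"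
    then have "exp u \<in> {1, -1}" by (simp add: sinh_zero_iff)
    then have "exp (u + u) = 1" using exp_add[of u u] by (auto simp del: exp_add)
    then obtain n :: int where n: "Re (u + u) = 0" "Im (u + u) = of_int (2 * n) * pi"
      by (auto simp: exp_eq_1)
    then have "u = \<i> * (of_int n * of_real pi)" by (simp add: complex_eq_iff)
    then show "u \<in> range (\<lambda>n::int. \<i> * (of_int n * of_real pi))" by blast
  qed
  then show ?thesis by (rule countable_subset) simp
qed

lemma bad_countable: "countable {y. \<not> gd \<eta> y a}"
proof -
  define Z where "Z = {u::complex. sinh u = 0}"
  have Z: "countable Z" unfolding Z_def by (rule sinh_zeros_countable)
  have "{y. \<not> gd \<eta> y a} \<subseteq> (\<lambda>u. u + a) ` Z \<union> (\<lambda>u. u + a - \<eta>) ` Z \<union> (\<lambda>u. u + a + \<eta>) ` Z"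
  proof
    fix y assume "y \<in> {y. \<not> gd \<eta> y a}"
    then have "sinh (y - a) = 0 \<or> sinh (y - a + \<eta>) = 0 \<or> sinh (y - a - \<eta>) = 0"
      unfolding gd_def by auto
    then show "y \<in> (\<lambda>u. u + a) ` Z \<union> (\<lambda>u. u + a - \<eta>) ` Z \<union> (\<lambda>u. u + a + \<eta>) ` Z"
    proof (elim disjE)
      assume "sinh (y - a) = 0"
      then have "y - a \<in> Z" unfolding Z_def by simp
      then show ?thesis by (auto intro!: image_eqI[of y _ "y - a"])
    next
      assume "sinh (y - a + \<eta>) = 0"
      then have "y - a + \<eta> \<in> Z" unfolding Z_def by simp
      then show ?thesis by (auto intro!: image_eqI[of y _ "y - a + \<eta>"])
    next
      assume "sinh (y - a - \<eta>) = 0"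
      then have "y - a - \<eta> \<in> Z" unfolding Z_def by simp
      then show ?thesis by (auto intro!: image_eqI[of y _ "y - a - \<eta>"])
    qed
  qed
  then show ?thesis using Z by (meson countable_Un countable_image countable_subset)
qed

lemma exists_good_list:
  assumes e: "e > 0"
  shows "\<exists>ys. length ys = length xs \<and> (\<forall>i<length xs. dist (ys!i) (xs!i) < e)
     \<and> (\<forall>i<length xs. \<forall>j<length xs. i \<noteq> j \<longrightarrow> gd \<eta> (ys!i) (ys!j))"
proof (induction xs rule: rev_induct)
  case Nil
  then show ?case by simp
next
  case (snoc x xs)
  then obtain ys where ys: "length ys = length xs" "\<forall>i<length xs. dist (ys!i) (xs!i) < e"
     "\<forall>i<length xs. \<forall>j<length xs. i \<noteq> j \<longrightarrow> gd \<eta> (ys!i) (ys!j)" by blast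
  define B where "B = (\<Union>a\<in>set ys. {y. \<not> gd \<eta> y a})"
  have "countable B" unfolding B_def by (intro countable_UN) (auto intro: bad_countable countable_finite)
  then have "ball x e - B \<noteq> {}" using e by (rule ball_minus_countable_nonempty)
  then obtain y where y: "y \<in> ball x e" "y \<notin> B" by blast
  have yg: "gd \<eta> y (ys!j)" if "j < length ys" for j
    using y(2) that unfolding B_def by auto
  show ?case
  proof (intro exI[of _ "ys @ [y]"] conjI allI impI)
    show "length (ys @ [y]) = length (xs @ [x])" using ys by simp
    fix i assume i: "i < length (xs @ [x])"
    show "dist ((ys @ [y]) ! i) ((xs @ [x]) ! i) < e"
    proof (cases "i < length xs")
      case True then show ?thesis using ys by (simp add: nth_append)
    next
      case False then have "i = length xs" using i by simp
      then show ?thesis using ys y(1) by (simp add: nth_append dist_commute)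
    qed
    fix j assume j: "j < length (xs @ [x])" and ij: "i \<noteq> j"
    show "gd \<eta> ((ys @ [y]) ! i) ((ys @ [y]) ! j)"
    proof (cases "i < length xs")
      case True
      show ?thesis
      proof (cases "j < length xs")
        case True
        then show ?thesis using \<open>i < length xs\<close> ys ij by (simp add: nth_append)
      next
        case False then have "j = length xs" using j by simp
        then show ?thesis using \<open>i < length xs\<close> ys yg[of i] gd_sym by (simp add: nth_append)
      qed
    next
      case False then have "i = length xs" using i by simp
      then have "j < length xs" using j ij by simp
      then show ?thesis using \<open>i = length xs\<close> ys yg[of j] by (simp add: nth_append)
    qed
  qed
qed

lemma gd_open:
  assumes g: "\<forall>i<N. \<forall>j<N. i \<noteq> j \<longrightarrow> gd \<eta> (xs!i) (xs!j)" and N: "N \<le> length xs"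
  shows "\<exists>e>0. \<forall>ys. length ys = length xs \<and> (\<forall>i<length xs. dist (ys!i) (xs!i) < e)
     \<longrightarrow> (\<forall>i<N. \<forall>j<N. i \<noteq> j \<longrightarrow> gd \<eta> (ys!i) (ys!j))"
proof -
  define I where "I = {..<N} \<times> {..<N} \<times> {0, \<eta>, -\<eta>}"
  define Q where "Q = (\<lambda>(i,j,c) (e::real). i \<noteq> j \<longrightarrow> (\<forall>u. dist u (xs!i - xs!j + c) < 2*e \<longrightarrow> sinh u \<noteq> 0))"
  have "eventually (Q t) (at_right 0)" if "t \<in> I" for t
  proof -
    obtain i j c where t: "t = (i,j,c)" by (cases t) auto
    show ?thesis
    proof (cases "i = j")
      case True then show ?thesis unfolding Q_def t by simp
    next
      case False
      have "i < N" "j < N" "c \<in> {0, \<eta>, -\<eta>}" using that t unfolding I_def by auto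
      then have nz: "sinh (xs!i - xs!j + c) \<noteq> 0"
        using g False unfolding gd_def by auto
      have "eventually (\<lambda>u. sinh u \<noteq> 0) (nhds (xs!i - xs!j + c))"
        using nz by (intro ev_nz_nhds) (auto intro!: continuous_intros)
      then obtain r where r: "r > 0" "\<And>u. dist u (xs!i - xs!j + c) < r \<Longrightarrow> sinh u \<noteq> 0"
        unfolding eventually_nhds_metric by blast
      show ?thesis unfolding eventually_at_right_field Q_def t
        by (intro exI[of _ "r/2"]) (use r in auto)
    qed
  qed
  then have "eventually (\<lambda>e. \<forall>t\<in>I. Q t e) (at_right 0)"
    by (intro eventually_ball_finite) (auto simp: I_def)
  then obtain b :: real where b: "b > 0" "\<And>y. y > 0 \<Longrightarrow> y < b \<Longrightarrow> \<forall>t\<in>I. Q t y"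
    unfolding eventually_at_right_field by blast
  define e where "e = b / 2"
  have e: "e > 0" "\<forall>t\<in>I. Q t e" using b unfolding e_def by auto
  show ?thesis
  proof (intro exI[of _ e] conjI allI impI e(1))
    fix ys i j assume ys: "length ys = length xs \<and> (\<forall>i<length xs. dist (ys!i) (xs!i) < e)"
      and ij: "i < N" "j < N" "i \<noteq> j"
    have di: "dist (ys!i) (xs!i) < e" "dist (ys!j) (xs!j) < e" using ys ij N by auto
    have key: "sinh (ys!i - ys!j + c) \<noteq> 0" if c: "c \<in> {0, \<eta>, -\<eta>}" for c
    proof -
      have "Q (i,j,c) e" using e(2) ij c unfolding I_def by auto
      moreover have "dist (ys!i - ys!j + c) (xs!i - xs!j + c) < 2*e"
      proof -
        have "dist (ys!i - ys!j + c) (xs!i - xs!j + c) = norm ((ys!i - xs!i) - (ys!j - xs!j))"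
          by (simp add: dist_norm algebra_simps)
        also have "\<dots> \<le> norm (ys!i - xs!i) + norm (ys!j - xs!j)" by (rule norm_triangle_ineq4)
        also have "\<dots> < 2*e" using di by (simp add: dist_norm)
        finally show ?thesis .
      qed
      ultimately show ?thesis unfolding Q_def using ij by auto
    qed
    show "gd \<eta> (ys!i) (ys!j)"
      unfolding gd_def using key[of 0] key[of \<eta>] key[of "-\<eta>"] by auto
  qed
qed

lemma prod_list_drop:
  assumes "n \<le> length xs"
  shows "prod_list (map f (drop n xs)) = (\<Prod>a\<in>{n..<length xs}. f (xs!a))"
proof -
  have "prod_list (map f (drop n xs)) = (\<Prod>c<length (drop n xs). f (drop n xs ! c))"
    by (rule prod_nth_list[symmetric])
  also have "\<dots> = (\<Prod>c\<in>{0..<length xs - n}. f (xs ! (c + n)))"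
    using assms by (intro prod.cong) (auto simp: add.commute)
  also have "\<dots> = (\<Prod>a\<in>{0 + n..<length xs - n + n}. f (xs ! a))"
    by (rule prod.shift_bounds_nat_ivl[symmetric])
  also have "\<dots> = (\<Prod>a\<in>{n..<length xs}. f (xs!a))" using assms by simp
  finally show ?thesis .
qed

theorem mainTheorem8:
  fixes \<eta> \<kappa> :: complex and \<xi> :: "nat \<Rightarrow> complex" and M n N :: nat
  assumes "sinh \<eta> \<noteq> 0" and "n \<le> N"
  shows "generic (N + n) (\<lambda>ps.
           let lams = take N ps; zs = drop N ps in
           iter_res (\<lambda>ws. Omega_det \<eta> \<xi> M \<kappa> (zs @ ws) lams (zs @ ws)) (drop n lams)
           = (\<Prod>a\<in>{n..<N}. Ycal \<eta> \<xi> M \<kappa> (lams ! a) (zs @ drop n lams))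
             * Omega_det \<eta> \<xi> M \<kappa> zs (take n lams) (zs @ drop n lams))"
proof -
  define U where "U = {ps. length ps = N + n \<and> (\<forall>i<N. \<forall>j<N. i \<noteq> j \<longrightarrow> gd \<eta> (ps!i) (ps!j))}"
  show ?thesis
    unfolding generic_def
  proof (intro exI[of _ U] conjI ballI allI impI)
    show "U \<subseteq> {xs. length xs = N + n}" unfolding U_def by auto
  next
    fix ps assume ps: "ps \<in> U"
    define lams where "lams = take N ps"
    define zs where "zs = drop N ps"
    have lenl: "length lams = N" using ps unfolding U_def lams_def by auto
    have lenz: "length zs = n" using ps unfolding U_def zs_def by auto
    have gl: "gd \<eta> (lams!i) (lams!j)" if "i < N" "j < N" "i \<noteq> j" for i j
      using ps that unfolding U_def lams_def by auto
    have dist_l: "distinct lams"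
      unfolding distinct_conv_nth
    proof (intro allI impI)
      fix i j assume "i < length lams" "j < length lams" "i \<noteq> j"
      then have "gd \<eta> (lams!i) (lams!j)" using gl lenl by auto
      then show "lams!i \<noteq> lams!j" unfolding gd_def by auto
    qed
    have set_g: "\<forall>x\<in>set lams. \<forall>y\<in>set lams. x \<noteq> y \<longrightarrow> gd \<eta> x y"
    proof (intro ballI impI)
      fix x y assume "x \<in> set lams" "y \<in> set lams" "x \<noteq> y"
      then obtain i j where "i < N" "j < N" "x = lams!i" "y = lams!j"
        using lenl by (auto simp: in_set_conv_nth)
      then show "gd \<eta> x y" using gl \<open>x \<noteq> y\<close> by auto
    qed
    have CP: "take n lams @ drop n lams = lams" by simp
    have lenC: "length (take n lams) = length zs" using lenl lenz assms(2) by simp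
    have "iter_res (\<lambda>ws. prod_list (map (\<lambda>q. Ycal \<eta> \<xi> M \<kappa> q (zs @ ws)) [])
         * Omega_det \<eta> \<xi> M \<kappa> (zs @ ws) (take n lams @ drop n lams) (zs @ ws)) (drop n lams)
      = prod_list (map (\<lambda>q. Ycal \<eta> \<xi> M \<kappa> q (zs @ drop n lams)) [])
        * prod_list (map (\<lambda>q. Ycal \<eta> \<xi> M \<kappa> q (zs @ drop n lams)) (drop n lams))
        * Omega_det \<eta> \<xi> M \<kappa> zs (take n lams) (zs @ drop n lams)"
      by (rule iter_main[OF assms(1) lenC]) (simp_all add: CP dist_l set_g)
    then have "iter_res (\<lambda>ws. Omega_det \<eta> \<xi> M \<kappa> (zs @ ws) lams (zs @ ws)) (drop n lams)
      = (\<Prod>a\<in>{n..<N}. Ycal \<eta> \<xi> M \<kappa> (lams ! a) (zs @ drop n lams))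
        * Omega_det \<eta> \<xi> M \<kappa> zs (take n lams) (zs @ drop n lams)"
      using prod_list_drop[of n lams "\<lambda>q. Ycal \<eta> \<xi> M \<kappa> q (zs @ drop n lams)"] lenl assms(2) by simp
    then show "let lams = take N ps; zs = drop N ps in
           iter_res (\<lambda>ws. Omega_det \<eta> \<xi> M \<kappa> (zs @ ws) lams (zs @ ws)) (drop n lams)
           = (\<Prod>a\<in>{n..<N}. Ycal \<eta> \<xi> M \<kappa> (lams ! a) (zs @ drop n lams))
             * Omega_det \<eta> \<xi> M \<kappa> zs (take n lams) (zs @ drop n lams)"
      unfolding lams_def zs_def Let_def .
  next
    fix xs assume xs: "xs \<in> U"
    then have g: "\<forall>i<N. \<forall>j<N. i \<noteq> j \<longrightarrow> gd \<eta> (xs!i) (xs!j)" and l: "length xs = N + n"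
      unfolding U_def by auto
    obtain e where e: "e > 0" "\<forall>ys. length ys = length xs \<and> (\<forall>i<length xs. dist (ys!i) (xs!i) < e)
       \<longrightarrow> (\<forall>i<N. \<forall>j<N. i \<noteq> j \<longrightarrow> gd \<eta> (ys!i) (ys!j))"
      using gd_open[OF g] l by auto
    show "\<exists>e>0. \<forall>ys. length ys = N + n \<and> (\<forall>i<N + n. dist (ys ! i) (xs ! i) < e) \<longrightarrow> ys \<in> U"
      using e l unfolding U_def by auto
  next
    fix xs :: "complex list" and e :: real assume l: "length xs = N + n" and e: "e > 0"
    obtain ys where ys: "length ys = length xs" "\<forall>i<length xs. dist (ys!i) (xs!i) < e"
       "\<forall>i<length xs. \<forall>j<length xs. i \<noteq> j \<longrightarrow> gd \<eta> (ys!i) (ys!j)"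
      using exists_good_list[OF e, of xs \<eta>] by blast
    show "\<exists>ys\<in>U. \<forall>i<N + n. dist (ys ! i) (xs ! i) < e"
      using ys l unfolding U_def by (intro bexI[of _ ys]) auto
  qed
qed

end
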